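(* Let $\mathrm{E}$ be $\mathrm{x}\simeq\mathrm{y}\diamond((\mathrm{y}\diamond(\mathrm{x}\diamond\mathrm{z}))\diamond\mathrm{z})$ and $\mathrm{E}'$ be $\mathrm{x}\simeq(\mathrm{x}\diamond((\mathrm{x}\diamond\mathrm{x})\diamond\mathrm{x}))\diamond\mathrm{x}$. Then: (a) the magma with carrier $\mathbb{Z}$ and operation $x\diamond y=2x-\lfloor y/2\rfloor$ satisfies $\mathrm{E}$ but not $\mathrm{E}'$, so $\mathrm{E}$ does not imply $\mathrm{E}'$; (b) every finite magma satisfying $\mathrm{E}$ satisfies $\mathrm{E}'$.
   Context: A magma is a set with a binary operation $\diamond$; it satisfies a law if the identity holds for all assignments of variables. *)

theory Defs
  imports Complex_Main
begin

definition satisfies_E :: "('a \<Rightarrow> 'a \<Rightarrow> 'a) \<Rightarrow> bool" where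
  "satisfies_E op \<longleftrightarrow> (\<forall>x y z. x = op y (op (op y (op x z)) z))"

definition satisfies_E' :: "('a \<Rightarrow> 'a \<Rightarrow> 'a) \<Rightarrow> bool" where
  "satisfies_E' op \<longleftrightarrow> (\<forall>x. x = op (op x (op (op x x) x)) x)"

definition zop :: "int \<Rightarrow> int \<Rightarrow> int" where
  "zop x y = 2 * x - \<lfloor>real_of_int y / 2\<rfloor>"

end

theory Submission
  imports Defs
begin
lemma zop_div: "zop x y = 2 * x - y div 2"
proof -
  have "\<lfloor>real_of_int y / 2\<rfloor> = \<lfloor>real_of_int y / real_of_int 2\<rfloor>" by simp
  also have "\<dots> = y div 2" by (rule floor_divide_of_int_eq)
  finally show ?thesis unfolding zop_def by simp
qed
lemma partA1: "satisfies_E zop"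
  unfolding satisfies_E_def zop_div
proof (intro allI)
  fix x y z :: int
  define a where "a = z div 2"
  define b where "b = (-a) div 2"
  define r where "r = (-a) mod 2"
  have ab: "-a = 2*b + r" unfolding b_def r_def by simp
  have r: "0 \<le> r" "r < 2" unfolding r_def by simp_all
  have h1: "(2 * x - a) div 2 = x + b" unfolding b_def by simp
  have e: "2 * (2 * y - (x + b)) - a = r + (2*y - x) * 2" using ab by simp
  have h2: "(2 * (2 * y - (x + b)) - a) div 2 = 2*y - x"
    unfolding e using r by simp
  show "x = 2 * y - (2 * (2 * y - (2 * x - z div 2) div 2) - z div 2) div 2"
    unfolding a_def[symmetric] h1 h2 by simp
qed
lemma partA2: "\<not> satisfies_E' zop"
proof
  assume "satisfies_E' zop"
  then have "(1::int) = zop (zop 1 (zop (zop 1 1) 1)) 1" unfolding satisfies_E'_def by blast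
  then show False unfolding zop_div by simp
qed

lemma partB:
  fixes op :: "'a::finite \<Rightarrow> 'a \<Rightarrow> 'a"
  assumes E: "satisfies_E op"
  shows "satisfies_E' op"
proof -
  have E1: "\<And>x y z. op y (op (op y (op x z)) z) = x" using E unfolding satisfies_E_def by (metis (no_types))
  have inj: "inj (op y)" for y
  proof -
    have "surj (op y)" using E1 by (rule surjI[of _ "\<lambda>x. op (op y (op x x)) x"])
    then show ?thesis by (rule finite_UNIV_surj_inj[OF finite_UNIV])
  qed
  show ?thesis unfolding satisfies_E'_def
  proof
    fix x
    have "op x (op (op x (op (op x x) x)) x) = op x x"
      by (rule E1)
    then show "x = op (op x (op (op x x) x)) x"
      using inj[of x] by (metis injD)
  qed
qed

theorem mainTheorem17:
  shows "(satisfies_E zop \<and> \<not> satisfies_E' zop) \<and>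
         (\<forall>op :: 'a::finite \<Rightarrow> 'a \<Rightarrow> 'a. satisfies_E op \<longrightarrow> satisfies_E' op)"
  using partA1 partA2 partB by blast

end
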